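(* Let $X=[0,1]^2$ with the order $(x_1,y_1)\prec(x_2,y_2)$ iff $x_1\le x_2$ and $y_1\le y_2$, and let $\mu$ be the uniform distribution on $X$. Let $\{c_i\}$ be a nonincreasing sequence in $(0,1]$ with $c_i=\Omega(1/\mathrm{poly}(i))$, and let $\alpha>0$ be a constant satisfying $c_i/c_{\lfloor i/2\rfloor}\ge\alpha$ for all sufficiently large $i$. Then for the threshold rule based on $\{c_i\}$, with probability $1-o(c_n)$ (as $n\to\infty$), at least $\alpha n/4$ of the samples in $S_n$ belong to $\mathcal{X}_n$.
   Context: For $x\in X$ let $\mathcal{U}(x)=\{y: x\prec y\}$. The threshold rule based on $\{c_i\}$ is $\mathcal{X}_0=X$, $\mathcal{X}_i=\{x\in X:\mu(\mathcal{U}(x))\le c_i\}$ for $i\ge1$. Samples $x_1,x_2,\dots$ are i.i.d. from $\mu$; sample $x_t$ is selected iff $x_t\in\mathcal{X}_j$, where $j$ is the number of samples selected among $x_1,\dots,x_{t-1}$. $S_n$ denotes the set of the first $n$ selected samples. *)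

theory Defs
  imports "HOL-Probability.Probability" "HOL-Library.Landau_Symbols"
begin

definition Xsq :: "(real \<times> real) set" where
  "Xsq = {0..1} \<times> {0..1}"

definition mu :: "(real \<times> real) measure" where
  "mu = uniform_measure lborel Xsq"

definition prec :: "real \<times> real \<Rightarrow> real \<times> real \<Rightarrow> bool" where
  "prec p q \<longleftrightarrow> fst p \<le> fst q \<and> snd p \<le> snd q"

definition upset :: "real \<times> real \<Rightarrow> (real \<times> real) set" where
  "upset x = {y \<in> Xsq. prec x y}"

definition thr_set :: "(nat \<Rightarrow> real) \<Rightarrow> nat \<Rightarrow> (real \<times> real) set" where
  "thr_set c i = (if i = 0 then Xsq else {x \<in> Xsq. measure mu (upset x) \<le> c i})"

fun nsel :: "(nat \<Rightarrow> real) \<Rightarrow> (nat \<Rightarrow> real \<times> real) \<Rightarrow> nat \<Rightarrow> nat" where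
  "nsel c \<omega> 0 = 0"
| "nsel c \<omega> (Suc t) = nsel c \<omega> t + (if \<omega> t \<in> thr_set c (nsel c \<omega> t) then 1 else 0)"

definition selected :: "(nat \<Rightarrow> real) \<Rightarrow> (nat \<Rightarrow> real \<times> real) \<Rightarrow> nat \<Rightarrow> bool" where
  "selected c \<omega> t \<longleftrightarrow> \<omega> t \<in> thr_set c (nsel c \<omega> t)"

text \<open>Good event: the first n selected samples exist (they are the selected samples
  among the first T samples, for some T with exactly n selections), and at least
  alpha*n/4 of them lie in X_n.\<close>
definition good_event :: "(nat \<Rightarrow> real) \<Rightarrow> real \<Rightarrow> nat \<Rightarrow> (nat \<Rightarrow> real \<times> real) \<Rightarrow> bool" where
  "good_event c \<alpha> n \<omega> \<longleftrightarrow> (\<exists>T. nsel c \<omega> T = n \<and>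
      real (card {t. t < T \<and> selected c \<omega> t \<and> \<omega> t \<in> thr_set c n}) \<ge> \<alpha> * real n / 4)"

text \<open>The i.i.d. sample sequence omega 0, omega 1, ... (paper: x_1, x_2, ...).\<close>
definition sample_space :: "(nat \<Rightarrow> real \<times> real) measure" where
  "sample_space = PiM UNIV (\<lambda>_. mu)"

end

theory Submission
  imports Defs "HOL-Real_Asymp.Real_Asymp"
begin


lemma Xsq_eq: "Xsq = {(0::real,0::real)..(1,1)}"
  unfolding Xsq_def by (auto simp: less_eq_prod_def)

lemma lborel_Times: "emeasure (lborel::(real\<times>real) measure) ({a..b} \<times> {c..d}) = emeasure lborel {a..b} * emeasure lborel {c..d}"
  by (subst lborel_prod[symmetric]) (simp add: sigma_finite_measure.emeasure_pair_measure_Times lborel.sigma_finite_measure_axioms)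

lemma emeasure_Xsq: "emeasure lborel Xsq = 1"
  unfolding Xsq_def by (simp add: lborel_Times)

lemma Xsq_sets[measurable]: "Xsq \<in> sets borel"
  unfolding Xsq_def by (intro borel_closed closed_Times) auto

lemma sets_mu[simp, measurable_cong]: "sets mu = sets borel"
  unfolding mu_def by simp

lemma space_mu[simp]: "space mu = UNIV"
  unfolding mu_def by simp

lemma prob_space_mu: "prob_space mu"
  unfolding mu_def by (rule prob_space_uniform_measure) (auto simp: emeasure_Xsq)

lemma emeasure_mu: "A \<in> sets borel \<Longrightarrow> emeasure mu A = emeasure lborel (A \<inter> Xsq)"
  unfolding mu_def by (simp add: emeasure_Xsq Int_commute divide_ennreal_def)

lemma measure_mu: "A \<in> sets borel \<Longrightarrow> measure mu A = measure lborel (A \<inter> Xsq)"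
  by (simp add: measure_def emeasure_mu)

lemma upset_eq: "x \<in> Xsq \<Longrightarrow> upset x = {fst x..1} \<times> {snd x..1}"
  unfolding upset_def prec_def Xsq_def by (cases x) auto

lemma measure_upset: "x \<in> Xsq \<Longrightarrow> measure mu (upset x) = (1 - fst x) * (1 - snd x)"
proof -
  assume x: "x \<in> Xsq"
  then have "upset x \<inter> Xsq = {fst x..1} \<times> {snd x..1}" by (auto simp: upset_eq Xsq_def)
  moreover have "upset x \<in> sets borel" using x by (simp add: upset_eq borel_closed closed_Times)
  ultimately have "measure mu (upset x) = measure lborel ({fst x..1} \<times> {snd x..1})"
    by (simp add: measure_mu)
  also have "\<dots> = (1 - fst x) * (1 - snd x)" using x
    by (simp add: measure_def lborel_Times Xsq_def ennreal_mult'[symmetric] mem_Times_iff)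
  finally show ?thesis .
qed

definition Xc :: "real \<Rightarrow> (real \<times> real) set" where
  "Xc a = {x \<in> Xsq. (1 - fst x) * (1 - snd x) \<le> a}"

lemma Xc_sets[measurable]: "Xc a \<in> sets borel"
proof -
  have "closed {x::real\<times>real. (1 - fst x) * (1 - snd x) \<le> a}"
    by (intro closed_Collect_le continuous_intros)
  moreover have "Xc a = Xsq \<inter> {x::real\<times>real. (1 - fst x) * (1 - snd x) \<le> a}"
    unfolding Xc_def by auto
  ultimately have "closed (Xc a)" unfolding Xsq_def by (simp add: closed_Int closed_Times)
  then show ?thesis by (rule borel_closed)
qed

lemma thr_set_eq: "i \<ge> 1 \<Longrightarrow> thr_set c i = Xc (c i)"
  unfolding thr_set_def Xc_def using measure_upset by auto

lemma thr_set_sets[measurable]: "thr_set c i \<in> sets borel"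
  by (cases "i = 0") (simp add: thr_set_def, simp add: thr_set_eq)

lemma Xc_1: "Xc 1 = Xsq"
  unfolding Xc_def Xsq_def by (auto intro: mult_le_one)

lemma Xc_mono: "a \<le> b \<Longrightarrow> Xc a \<subseteq> Xc b"
  unfolding Xc_def by auto

lemma Xc_sub: "Xc a \<subseteq> Xsq" unfolding Xc_def by auto

lemma sec_eq_aux: fixes x a y :: real assumes u: "1 - x > 0"
 shows "(1-x)*(1-y) \<le> a \<longleftrightarrow> 1 - a/(1-x) \<le> y"
  proof -
    have "1 - a/(1-x) \<le> y \<longleftrightarrow> 1 - y \<le> a/(1-x)" by linarith
    also have "\<dots> \<longleftrightarrow> (1 - y) * (1-x) \<le> a" using u by (rule pos_le_divide_eq)
    finally show ?thesis by (simp add: mult.commute)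
  qed
lemma sec_eq:
  assumes "0 \<le> x" "x < 1"
  shows "{y. y \<in> {0..1} \<and> (1-x)*(1-y) \<le> a} = {max 0 (1 - a/(1-x))..(1::real)}"
proof -
  have u: "1 - x > 0" using assms by simp
  show ?thesis
  apply (rule set_eqI) apply (simp only: mem_Collect_eq atLeastAtMost_iff max.bounded_iff sec_eq_aux[OF u]) by blast
qed

lemma one_minus_max: "1 - max 0 (1 - t) = min 1 (t::real)"
  by (cases "t \<le> 1") (auto simp: max_def min_def)

lemma min_scale:
  fixes t :: real assumes "0 \<le> \<alpha>" "\<alpha> \<le> 1" "0 \<le> t"
  shows "\<alpha> * min 1 t \<le> min 1 (\<alpha>*t)"
proof (cases "t \<le> 1")
  case True
  then have "\<alpha> * t \<le> 1" using assms by (simp add: mult_le_one)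
  then show ?thesis using True by (simp add: min_def)
next
  case False
  then have "\<alpha> \<le> \<alpha> * t" using assms by (simp add: mult_le_cancel_left1)
  then show ?thesis using False assms by (simp add: min_def)
qed

lemma sec_ineq:
  fixes \<alpha> a u :: real
  assumes "0 < \<alpha>" "\<alpha> \<le> 1" "0 < a" "0 < u"
  shows "\<alpha> * (1 - max 0 (1 - a/u)) \<le> 1 - max 0 (1 - \<alpha>*a/u)"
  using min_scale[of \<alpha> "a/u"] assms by (simp add: one_minus_max)

lemma Xc_section: "Pair x -` Xc a = (if x \<in> {0..1} then {y. y \<in> {0..1} \<and> (1-x)*(1-y) \<le> a} else {})"
  unfolding Xc_def Xsq_def by auto

lemma sec_scale:
  assumes "0 < \<alpha>" "\<alpha> \<le> 1" "0 < a"
  shows "ennreal \<alpha> * emeasure lborel (Pair x -` Xc a) \<le> emeasure lborel (Pair x -` Xc (\<alpha>*a))"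
proof (cases "x \<in> {0..1}")
  case False
  then have "Pair x -` Xc b = {}" for b by (simp only: Xc_section if_False)
  then show ?thesis by simp
next
  case True
  show ?thesis
  proof (cases "x = 1")
    case True
    have "Pair x -` Xc b = {0..1}" if "b > 0" for b::real
      using True that \<open>x \<in> {0..1}\<close> unfolding Xc_section by auto
    then show ?thesis using assms
      by (simp add: ennreal_leI)
  next
    case False
    then have x: "0 \<le> x" "x < 1" using \<open>x \<in> {0..1}\<close> by auto
    have pa: "0 < \<alpha>*a" using assms by simp
    have m1: "max 0 (1 - b/(1-x)) \<le> 1" if "b > 0" for b::real using that x by simp
    have ineq: "ennreal \<alpha> * ennreal (1 - max 0 (1 - a/(1-x))) \<le> ennreal (1 - max 0 (1 - \<alpha>*a/(1-x)))"
      using sec_ineq[OF assms, of "1-x"] x assms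
      by (simp add: ennreal_mult'[symmetric])
    have sec: "Pair x -` Xc b = {max 0 (1 - b/(1-x))..1}" if "b > 0" for b::real
      using sec_eq[OF x] \<open>x \<in> {0..1}\<close> unfolding Xc_section by simp
    have e: "emeasure lborel (Pair x -` Xc b) = ennreal (1 - max 0 (1 - b/(1-x)))" if "b > 0" for b::real
      unfolding sec[OF that] using m1[OF that] by (simp only: emeasure_lborel_Icc)
    show ?thesis unfolding e[OF assms(3)] e[OF pa] by (rule ineq)
  qed
qed

lemma sets_bb: "sets (borel \<Otimes>\<^sub>M borel) = sets (borel :: (real\<times>real) measure)"
  by (simp only: borel_prod)

lemma emeasure_lborel_pair: "S \<in> sets borel \<Longrightarrow>
  emeasure (lborel::(real\<times>real) measure) S = (\<integral>\<^sup>+ x. emeasure lborel (Pair x -` S) \<partial>lborel)"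
  by (subst lborel_prod[symmetric], subst lborel.emeasure_pair_measure_alt) (auto simp: lborel_prod sets_bb)

lemma Xc_scale_e:
  assumes "0 < \<alpha>" "\<alpha> \<le> 1" "0 < a"
  shows "ennreal \<alpha> * emeasure lborel (Xc a) \<le> emeasure lborel (Xc (\<alpha>*a))"
proof -
  have "ennreal \<alpha> * emeasure lborel (Xc a) = (\<integral>\<^sup>+ x. ennreal \<alpha> * emeasure lborel (Pair x -` Xc a) \<partial>lborel)"
    unfolding emeasure_lborel_pair[OF Xc_sets]
    by (rule nn_integral_cmult[symmetric]) (rule lborel.measurable_emeasure_Pair, simp add: sets_bb)
  also have "\<dots> \<le> (\<integral>\<^sup>+ x. emeasure lborel (Pair x -` Xc (\<alpha>*a)) \<partial>lborel)"
    by (rule nn_integral_mono) (rule sec_scale[OF assms])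
  also have "\<dots> = emeasure lborel (Xc (\<alpha>*a))"
    unfolding emeasure_lborel_pair[OF Xc_sets] ..
  finally show ?thesis .
qed

lemma emeasure_mu_Xc: "emeasure mu (Xc a) = emeasure lborel (Xc a)"
  using Xc_sub[of a] by (simp add: emeasure_mu Int_absorb2)

lemma Xc_scale:
  assumes "0 < \<alpha>" "\<alpha> \<le> 1" "0 < a"
  shows "\<alpha> * measure mu (Xc a) \<le> measure mu (Xc (\<alpha>*a))"
proof -
  interpret prob_space mu by (rule prob_space_mu)
  have "ennreal (\<alpha> * measure mu (Xc a)) \<le> ennreal (measure mu (Xc (\<alpha>*a)))"
    using Xc_scale_e[OF assms] assms
    by (simp add: emeasure_eq_measure[symmetric] emeasure_mu_Xc ennreal_mult')
  then show ?thesis by (simp add: ennreal_le_iff)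
qed

lemma measure_Xsq: "measure mu Xsq = 1"
  using emeasure_mu[OF Xsq_sets] by (simp add: measure_def emeasure_Xsq)

lemma Xc_lower:
  assumes "0 < a" "a \<le> 1"
  shows "a \<le> measure mu (Xc a)"
  using Xc_scale[OF assms, of 1] by (simp add: Xc_1 measure_Xsq)



fun stg :: "(nat \<Rightarrow> 'a set) \<Rightarrow> nat \<Rightarrow> (nat \<Rightarrow> 'a) \<Rightarrow> nat \<Rightarrow> nat" where
  "stg A j \<omega> 0 = j"
| "stg A j \<omega> (Suc t) = stg A (if \<omega> 0 \<in> A j then Suc j else j) (\<lambda>i. \<omega> (Suc i)) t"

lemma stg_Suc': "stg A j \<omega> (Suc t) = stg A j \<omega> t + (if \<omega> t \<in> A (stg A j \<omega> t) then 1 else 0)"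
proof (induction t arbitrary: j \<omega>)
  case 0 then show ?case by simp
next
  case (Suc t)
  define j' where "j' = (if \<omega> 0 \<in> A j then Suc j else j)"
  define \<omega>' where "\<omega>' = (\<lambda>i. \<omega> (Suc i))"
  have "stg A j \<omega> (Suc (Suc t)) = stg A j' \<omega>' (Suc t)" unfolding j'_def \<omega>'_def by (simp only: stg.simps)
  also have "\<dots> = stg A j' \<omega>' t + (if \<omega>' t \<in> A (stg A j' \<omega>' t) then 1 else 0)" by (rule Suc.IH)
  also have "stg A j' \<omega>' t = stg A j \<omega> (Suc t)" unfolding j'_def \<omega>'_def by (simp only: stg.simps)
  finally show ?case unfolding \<omega>'_def by simp
qed

declare stg.simps(2)[simp del]

lemma stg_ge: "j \<le> stg A j \<omega> t"
  by (induction t) (auto simp: stg_Suc' intro: le_trans[OF _ le_add1])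

lemma stg_mono: "s \<le> t \<Longrightarrow> stg A j \<omega> s \<le> stg A j \<omega> t"
proof (induction t)
  case 0 then show ?case by simp
next
  case (Suc t) then show ?case by (cases "s = Suc t") (auto simp: stg_Suc' le_Suc_eq)
qed

lemma nsel_stg: "nsel c \<omega> t = stg (thr_set c) 0 \<omega> t"
  by (induction t) (auto simp: stg_Suc')

fun hc :: "(nat \<Rightarrow> 'a set) \<Rightarrow> 'a set \<Rightarrow> nat \<Rightarrow> nat \<Rightarrow> nat \<Rightarrow> (nat \<Rightarrow> 'a) \<Rightarrow> nat \<Rightarrow> nat" where
  "hc A B m n j \<omega> 0 = 0"
| "hc A B m n j \<omega> (Suc t) = (if m \<le> j \<and> j < n \<and> \<omega> 0 \<in> A j \<and> \<omega> 0 \<in> B then 1 else 0)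
     + hc A B m n (if \<omega> 0 \<in> A j then Suc j else j) (\<lambda>i. \<omega> (Suc i)) t"

lemma hc_Suc': "hc A B m n j \<omega> (Suc t) = hc A B m n j \<omega> t +
   (if m \<le> stg A j \<omega> t \<and> stg A j \<omega> t < n \<and> \<omega> t \<in> A (stg A j \<omega> t) \<and> \<omega> t \<in> B then 1 else 0)"
proof (induction t arbitrary: j \<omega>)
  case 0 then show ?case by simp
next
  case (Suc t)
  define j' where "j' = (if \<omega> 0 \<in> A j then Suc j else j)"
  define \<omega>' where "\<omega>' = (\<lambda>i. \<omega> (Suc i))"
  define h where "h = (if m \<le> j \<and> j < n \<and> \<omega> 0 \<in> A j \<and> \<omega> 0 \<in> B then 1 else (0::nat))"
  have "hc A B m n j \<omega> (Suc (Suc t)) = h + hc A B m n j' \<omega>' (Suc t)"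
    unfolding j'_def \<omega>'_def h_def by (simp only: hc.simps)
  also have "hc A B m n j' \<omega>' (Suc t) = hc A B m n j' \<omega>' t +
     (if m \<le> stg A j' \<omega>' t \<and> stg A j' \<omega>' t < n \<and> \<omega>' t \<in> A (stg A j' \<omega>' t) \<and> \<omega>' t \<in> B then 1 else 0)"
    by (rule Suc.IH)
  also have "stg A j' \<omega>' t = stg A j \<omega> (Suc t)" unfolding j'_def \<omega>'_def by (simp only: stg.simps)
  finally have E: "hc A B m n j \<omega> (Suc (Suc t)) = h + (hc A B m n j' \<omega>' t +
     (if m \<le> stg A j \<omega> (Suc t) \<and> stg A j \<omega> (Suc t) < n \<and> \<omega>' t \<in> A (stg A j \<omega> (Suc t)) \<and> \<omega>' t \<in> B then 1 else 0))" .
  have E4: "h + hc A B m n j' \<omega>' t = hc A B m n j \<omega> (Suc t)"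
    unfolding j'_def \<omega>'_def h_def by (simp only: hc.simps)
  show ?case using E E4 unfolding \<omega>'_def by simp
qed

declare hc.simps(2)[simp del]

lemma hc_card: "hc A B m n j \<omega> T = card {t. t < T \<and> m \<le> stg A j \<omega> t \<and> stg A j \<omega> t < n
   \<and> \<omega> t \<in> A (stg A j \<omega> t) \<and> \<omega> t \<in> B}"
proof (induction T)
  case 0 then show ?case by simp
next
  case (Suc T)
  let ?P = "\<lambda>t. m \<le> stg A j \<omega> t \<and> stg A j \<omega> t < n \<and> \<omega> t \<in> A (stg A j \<omega> t) \<and> \<omega> t \<in> B"
  have "{t. t < Suc T \<and> ?P t} = (if ?P T then insert T {t. t < T \<and> ?P t} else {t. t < T \<and> ?P t})"
    by (auto simp: less_Suc_eq)
  then show ?case using Suc by (simp add: hc_Suc')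
qed

fun V :: "(nat \<Rightarrow> 'a set) \<Rightarrow> nat \<Rightarrow> (nat \<Rightarrow> 'a \<Rightarrow> ennreal) \<Rightarrow> ennreal \<Rightarrow> ennreal \<Rightarrow> nat \<Rightarrow> nat \<Rightarrow> (nat \<Rightarrow> 'a) \<Rightarrow> ennreal" where
  "V A n g \<rho> e 0 j \<omega> = (if n \<le> j then 1 else e)"
| "V A n g \<rho> e (Suc T) j \<omega> = (if n \<le> j then 1 else if \<omega> 0 \<in> A j then g j (\<omega> 0) * V A n g \<rho> e T (Suc j) (\<lambda>i. \<omega> (Suc i))
      else \<rho> * V A n g \<rho> e T j (\<lambda>i. \<omega> (Suc i)))"

lemma shift_measurable: "(\<lambda>\<omega> i. \<omega> (Suc i)) \<in> measurable (PiM UNIV (\<lambda>_. M)) (PiM UNIV (\<lambda>_. M))"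
  by (rule measurable_PiM_single'[where f="\<lambda>i \<omega>. \<omega> (Suc i)"]) (auto simp: space_PiM)

lemma V_measurable:
  assumes A: "\<And>j. A j \<in> sets M" and g: "\<And>j. g j \<in> borel_measurable M"
  shows "(\<lambda>\<omega>. V A n g \<rho> e T j \<omega>) \<in> borel_measurable (PiM UNIV (\<lambda>_. M))"
proof (induction T arbitrary: j)
  case 0 then show ?case by simp
next
  case (Suc T)
  have m0: "(\<lambda>\<omega>. \<omega> 0) \<in> measurable (PiM UNIV (\<lambda>_. M)) M" by measurable
  have p: "{\<omega> \<in> space (PiM UNIV (\<lambda>_. M)). \<omega> 0 \<in> A j} \<in> sets (PiM UNIV (\<lambda>_. M))"
    using measurable_sets[OF m0 A[of j]] by (simp add: vimage_def Int_def conj_commute)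
  have s1: "(\<lambda>\<omega>. V A n g \<rho> e T (Suc j) (\<lambda>i. \<omega> (Suc i))) \<in> borel_measurable (PiM UNIV (\<lambda>_. M))"
    using measurable_comp[OF shift_measurable Suc.IH[of "Suc j"]] by (simp add: comp_def)
  have s2: "(\<lambda>\<omega>. V A n g \<rho> e T j (\<lambda>i. \<omega> (Suc i))) \<in> borel_measurable (PiM UNIV (\<lambda>_. M))"
    using measurable_comp[OF shift_measurable Suc.IH[of j]] by (simp add: comp_def)
  have s3: "(\<lambda>\<omega>. g j (\<omega> 0)) \<in> borel_measurable (PiM UNIV (\<lambda>_. M))"
    using measurable_comp[OF m0 g[of j]] by (simp add: comp_def)
  show ?case
  proof (cases "n \<le> j")
    case True then show ?thesis by simp
  next
    case False then show ?thesis
      by (simp only: V.simps if_False) (intro measurable_If p borel_measurable_times_ennreal s1 s2 s3 measurable_const, simp_all)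
  qed
qed

lemma nn_integral_PiM_case_nat:
  assumes M: "prob_space M" and f: "f \<in> borel_measurable (PiM UNIV (\<lambda>_. M))"
  shows "(\<integral>\<^sup>+\<omega>. f \<omega> \<partial>PiM UNIV (\<lambda>_. M)) = (\<integral>\<^sup>+s. \<integral>\<^sup>+\<omega>. f (case_nat s \<omega>) \<partial>PiM UNIV (\<lambda>_. M) \<partial>M)"
proof -
  interpret prob_space M by (rule M)
  interpret S: sequence_space M by unfold_locales
  have h: "(\<lambda>(s, \<omega>). case_nat s \<omega>) \<in> measurable (M \<Otimes>\<^sub>M S.S) S.S" by measurable
  have "(\<integral>\<^sup>+\<omega>. f \<omega> \<partial>S.S) = (\<integral>\<^sup>+\<omega>. f \<omega> \<partial>distr (M \<Otimes>\<^sub>M S.S) S.S (\<lambda>(s, \<omega>). case_nat s \<omega>))"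
    by (simp only: S.PiM_iter)
  also have "\<dots> = (\<integral>\<^sup>+x. f (case x of (s, \<omega>) \<Rightarrow> case_nat s \<omega>) \<partial>(M \<Otimes>\<^sub>M S.S))"
    by (rule nn_integral_distr[OF h]) (use f in simp)
  also have "\<dots> = (\<integral>\<^sup>+s. \<integral>\<^sup>+\<omega>. f (case_nat s \<omega>) \<partial>S.S \<partial>M)"
    by (rule S.P.nn_integral_fst[symmetric, where f = "\<lambda>x. f (case x of (s, \<omega>) \<Rightarrow> case_nat s \<omega>)", simplified])
       (rule measurable_comp[OF h f, unfolded comp_def])
  finally show ?thesis .
qed

lemma V_bound:
  assumes M: "prob_space M" and A: "\<And>j. A j \<in> sets M" and g: "\<And>j. g j \<in> borel_measurable M"
    and cond: "\<And>j. j < n \<Longrightarrow> (\<integral>\<^sup>+x. indicator (A j) x * g j x \<partial>M) * C (Suc j) + \<rho> * emeasure M (space M - A j) * C j \<le> C j"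
    and ce: "\<And>j. j < n \<Longrightarrow> e \<le> C j" and c1: "\<And>j. n \<le> j \<Longrightarrow> 1 \<le> C j"
  shows "(\<integral>\<^sup>+\<omega>. V A n g \<rho> e T j \<omega> \<partial>PiM UNIV (\<lambda>_. M)) \<le> C j"
proof (induction T arbitrary: j)
  interpret prob_space M by (rule M)
  interpret PS: prob_space "PiM UNIV (\<lambda>_. M)" by (rule prob_space_PiM) (rule M)
  case 0
  show ?case using ce c1 by (cases "n \<le> j") (auto simp: PS.emeasure_space_1)
next
  interpret prob_space M by (rule M)
  interpret PS: prob_space "PiM UNIV (\<lambda>_. M)" by (rule prob_space_PiM) (rule M)
  case (Suc T)
  show ?case
  proof (cases "n \<le> j")
    case True then show ?thesis using c1 by (simp add: PS.emeasure_space_1)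
  next
    case False
    let ?S = "PiM UNIV (\<lambda>_. M)"
    define E1 where "E1 = (\<integral>\<^sup>+\<omega>. V A n g \<rho> e T (Suc j) \<omega> \<partial>?S)"
    define E2 where "E2 = (\<integral>\<^sup>+\<omega>. V A n g \<rho> e T j \<omega> \<partial>?S)"
    have mV: "\<And>T j. (\<lambda>\<omega>. V A n g \<rho> e T j \<omega>) \<in> borel_measurable ?S"
      by (rule V_measurable[OF A g])
    have pt: "(\<integral>\<^sup>+\<omega>. V A n g \<rho> e (Suc T) j (case_nat s \<omega>) \<partial>?S) = (if s \<in> A j then g j s * E1 else \<rho> * E2)" for s
    proof -
      have "V A n g \<rho> e (Suc T) j (case_nat s \<omega>) = (if s \<in> A j then g j s * V A n g \<rho> e T (Suc j) \<omega> else \<rho> * V A n g \<rho> e T j \<omega>)" for \<omega>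
        using False by simp
      then show ?thesis unfolding E1_def E2_def
        by (simp add: nn_integral_cmult mV)
    qed
    have "(\<integral>\<^sup>+\<omega>. V A n g \<rho> e (Suc T) j \<omega> \<partial>?S) = (\<integral>\<^sup>+s. \<integral>\<^sup>+\<omega>. V A n g \<rho> e (Suc T) j (case_nat s \<omega>) \<partial>?S \<partial>M)"
      by (rule nn_integral_PiM_case_nat[OF M mV])
    also have "\<dots> = (\<integral>\<^sup>+s. (if s \<in> A j then g j s * E1 else \<rho> * E2) \<partial>M)"
      by (simp only: pt)
    also have "\<dots> \<le> (\<integral>\<^sup>+s. indicator (A j) s * g j s * C (Suc j) + indicator (space M - A j) s * (\<rho> * C j) \<partial>M)"
    proof (rule nn_integral_mono)
      fix s assume s: "s \<in> space M"
      have "E1 \<le> C (Suc j)" unfolding E1_def by (rule Suc.IH)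
      moreover have "E2 \<le> C j" unfolding E2_def by (rule Suc.IH)
      ultimately show "(if s \<in> A j then g j s * E1 else \<rho> * E2) \<le> indicator (A j) s * g j s * C (Suc j) + indicator (space M - A j) s * (\<rho> * C j)"
        using s by (auto intro: mult_left_mono)
    qed
    also have "\<dots> = (\<integral>\<^sup>+x. indicator (A j) x * g j x \<partial>M) * C (Suc j) + \<rho> * emeasure M (space M - A j) * C j"
    proof -
      have mA: "(\<lambda>s. indicator (A j) s * g j s * C (Suc j)) \<in> borel_measurable M" using A[of j] g[of j] by measurable
      have mB: "(\<lambda>s. indicator (space M - A j) s * (\<rho> * C j)) \<in> borel_measurable M" using A[of j] by measurable
      have "(\<integral>\<^sup>+s. indicator (A j) s * g j s * C (Suc j) + indicator (space M - A j) s * (\<rho> * C j) \<partial>M)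
          = (\<integral>\<^sup>+s. indicator (A j) s * g j s * C (Suc j) \<partial>M) + (\<integral>\<^sup>+s. indicator (space M - A j) s * (\<rho> * C j) \<partial>M)"
        by (rule nn_integral_add[OF mA mB])
      also have "(\<integral>\<^sup>+s. indicator (A j) s * g j s * C (Suc j) \<partial>M) = (\<integral>\<^sup>+x. indicator (A j) x * g j x \<partial>M) * C (Suc j)"
        by (rule nn_integral_multc) (use A[of j] g[of j] in measurable)
      also have "(\<integral>\<^sup>+s. indicator (space M - A j) s * (\<rho> * C j) \<partial>M) = (\<rho> * C j) * emeasure M (space M - A j)"
        using nn_integral_cmult_indicator[of "space M - A j" M "\<rho> * C j"] A[of j]
        by (simp add: mult.commute sets.Diff)
      finally show ?thesis by (simp add: mult_ac)
    qed
    also have "\<dots> \<le> C j" using cond False by simp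
    finally show ?thesis .
  qed
qed



lemma V1_lower:
  assumes r: "r \<le> 1" and "n \<le> stg A j \<omega> T"
  shows "ennreal r ^ hc A B m n j \<omega> T \<le> V A n (\<lambda>j x. if m \<le> j \<and> x \<in> B then ennreal r else 1) 1 0 T j \<omega>"
  using assms(2)
proof (induction T arbitrary: j \<omega>)
  case 0 then show ?case by simp
next
  case (Suc T)
  have r1: "ennreal r ^ k \<le> 1" for k using r by (simp add: power_le_one)
  show ?case
  proof (cases "n \<le> j")
    case True then show ?thesis using r1 by simp
  next
    case False
    let ?\<omega>' = "\<lambda>i. \<omega> (Suc i)"
    show ?thesis
    proof (cases "\<omega> 0 \<in> A j")
      case True
      have "n \<le> stg A (Suc j) ?\<omega>' T" using Suc.prems True by (simp add: stg.simps(2))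
      note IH = Suc.IH[OF this]
      show ?thesis
      proof (cases "m \<le> j \<and> \<omega> 0 \<in> B")
        case True
        then show ?thesis using False \<open>\<omega> 0 \<in> A j\<close> IH
          by (simp add: hc.simps(2) mult_left_mono)
      next
        case False
        then show ?thesis using \<open>\<not> n \<le> j\<close> \<open>\<omega> 0 \<in> A j\<close> IH
          by (auto simp: hc.simps(2))
      qed
    next
      case nA: False
      have "n \<le> stg A j ?\<omega>' T" using Suc.prems nA by (simp add: stg.simps(2))
      note IH = Suc.IH[OF this]
      show ?thesis using False nA IH by (simp add: hc.simps(2))
    qed
  qed
qed

lemma V2_lower:
  assumes r: "1 \<le> \<rho>" and "stg A j \<omega> T < n"
  shows "ennreal \<rho> ^ (T + j - n) \<le> V A n (\<lambda>j x. 1) (ennreal \<rho>) 1 T j \<omega>"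
  using assms(2)
proof (induction T arbitrary: j \<omega>)
  case 0 then show ?case by simp
next
  case (Suc T)
  have jn: "j < n" using Suc.prems stg_ge[of j A \<omega> "Suc T"] by simp
  let ?\<omega>' = "\<lambda>i. \<omega> (Suc i)"
  show ?case
  proof (cases "\<omega> 0 \<in> A j")
    case True
    have "stg A (Suc j) ?\<omega>' T < n" using Suc.prems True by (simp add: stg.simps(2))
    note IH = Suc.IH[OF this]
    show ?thesis using jn True IH by simp
  next
    case nA: False
    have "stg A j ?\<omega>' T < n" using Suc.prems nA by (simp add: stg.simps(2))
    note IH = Suc.IH[OF this]
    have "ennreal \<rho> ^ (Suc T + j - n) \<le> ennreal \<rho> ^ Suc (T + j - n)"
      by (rule power_increasing) (use r in auto)
    also have "\<dots> = ennreal \<rho> * ennreal \<rho> ^ (T + j - n)" by simp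
    also have "\<dots> \<le> ennreal \<rho> * V A n (\<lambda>j x. 1) (ennreal \<rho>) 1 T j ?\<omega>'"
      by (rule mult_left_mono[OF IH]) simp
    finally show ?thesis using jn nA by simp
  qed
qed

lemma nsel_ivt: "k \<le> nsel c \<omega> T \<Longrightarrow> \<exists>T'\<le>T. nsel c \<omega> T' = k"
proof (induction T arbitrary: k)
  case 0 then show ?case by simp
next
  case (Suc T)
  show ?case
  proof (cases "k \<le> nsel c \<omega> T")
    case True then show ?thesis using Suc.IH by (meson le_SucI)
  next
    case False
    then have "k = nsel c \<omega> (Suc T)" using Suc.prems by (auto split: if_splits)
    then show ?thesis by blast
  qed
qed

lemma good_suff:
  assumes "n \<le> nsel c \<omega> T"
    and K: "\<alpha> * real n / 4 \<le> real (hc (thr_set c) (thr_set c n) m n 0 \<omega> T)"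
  shows "good_event c \<alpha> n \<omega>"
proof -
  obtain T' where T': "T' \<le> T" "nsel c \<omega> T' = n" using nsel_ivt[OF assms(1)] by blast
  let ?A = "thr_set c"
  have sub: "{t. t < T \<and> m \<le> stg ?A 0 \<omega> t \<and> stg ?A 0 \<omega> t < n \<and> \<omega> t \<in> ?A (stg ?A 0 \<omega> t) \<and> \<omega> t \<in> thr_set c n}
      \<subseteq> {t. t < T' \<and> selected c \<omega> t \<and> \<omega> t \<in> thr_set c n}"
  proof
    fix t assume t: "t \<in> {t. t < T \<and> m \<le> stg ?A 0 \<omega> t \<and> stg ?A 0 \<omega> t < n \<and> \<omega> t \<in> ?A (stg ?A 0 \<omega> t) \<and> \<omega> t \<in> thr_set c n}"
    have "t < T'"
    proof (rule ccontr)
      assume "\<not> t < T'"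
      then have "stg ?A 0 \<omega> T' \<le> stg ?A 0 \<omega> t" by (intro stg_mono) simp
      then show False using t T'(2) by (simp add: nsel_stg)
    qed
    then show "t \<in> {t. t < T' \<and> selected c \<omega> t \<and> \<omega> t \<in> thr_set c n}"
      using t by (simp add: selected_def nsel_stg)
  qed
  have "card {t. t < T \<and> m \<le> stg ?A 0 \<omega> t \<and> stg ?A 0 \<omega> t < n \<and> \<omega> t \<in> ?A (stg ?A 0 \<omega> t) \<and> \<omega> t \<in> thr_set c n}
      \<le> card {t. t < T' \<and> selected c \<omega> t \<and> \<omega> t \<in> thr_set c n}"
    by (rule card_mono[OF _ sub]) simp
  then have "real (hc (thr_set c) (thr_set c n) m n 0 \<omega> T) \<le> real (card {t. t < T' \<and> selected c \<omega> t \<and> \<omega> t \<in> thr_set c n})"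
    by (simp add: hc_card)
  then show ?thesis unfolding good_event_def using T'(2) K by (intro exI[of _ T']) simp
qed



lemma space_sample: "space sample_space = UNIV"
  unfolding sample_space_def by (simp add: space_PiM)

lemma comp_meas: "(\<lambda>\<omega>. \<omega> t) \<in> measurable sample_space mu"
  unfolding sample_space_def by measurable

lemma pred_comp: "A \<in> sets borel \<Longrightarrow> {\<omega> \<in> space sample_space. \<omega> t \<in> A} \<in> sets sample_space"
  using measurable_sets[OF comp_meas, of A t] by (simp add: vimage_def Int_def conj_commute)

lemma nsel_meas: "(\<lambda>\<omega>. nsel c \<omega> t) \<in> measurable sample_space (count_space UNIV)"
proof (induction t)
  case 0 then show ?case by simp
next
  case (Suc t)
  have "(\<lambda>\<omega>. (\<lambda>k \<omega>. if \<omega> t \<in> thr_set c k then k + 1 else k) (nsel c \<omega> t) \<omega>) \<in> measurable sample_space (count_space UNIV)"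
  proof (rule measurable_compose_countable'[OF _ Suc.IH])
    fix k :: nat
    show "(\<lambda>\<omega>. if \<omega> t \<in> thr_set c k then k + 1 else k) \<in> measurable sample_space (count_space UNIV)"
      by (rule measurable_If) (auto intro: pred_comp)
  qed simp
  moreover have "(\<lambda>\<omega>. nsel c \<omega> (Suc t)) = (\<lambda>\<omega>. (\<lambda>k \<omega>. if \<omega> t \<in> thr_set c k then k + 1 else k) (nsel c \<omega> t) \<omega>)"
    by (rule ext) simp
  ultimately show ?case by simp
qed

lemma sel_pred: "{\<omega> \<in> space sample_space. \<omega> t \<in> thr_set c (nsel c \<omega> t) \<and> \<omega> t \<in> thr_set c n} \<in> sets sample_space"
proof -
  have "(\<lambda>\<omega>. (\<lambda>k \<omega>. \<omega> t \<in> thr_set c k \<and> \<omega> t \<in> thr_set c n) (nsel c \<omega> t) \<omega>) \<in> measurable sample_space (count_space UNIV)"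
  proof (rule measurable_compose_countable'[OF _ nsel_meas])
    fix k :: nat
    have "{\<omega> \<in> space sample_space. \<omega> t \<in> thr_set c k \<and> \<omega> t \<in> thr_set c n} \<in> sets sample_space"
      using pred_comp[of "thr_set c k \<inter> thr_set c n" t] by simp
    then show "(\<lambda>\<omega>. \<omega> t \<in> thr_set c k \<and> \<omega> t \<in> thr_set c n) \<in> measurable sample_space (count_space UNIV)"
      by (simp add: pred_def)
  qed simp
  then show ?thesis by (simp add: pred_def)
qed

lemma card_sum: fixes T :: nat shows "real (card {t. t < T \<and> P t}) = (\<Sum>t<T. if P t then 1 else 0)"
proof -
  have "{t. t < T \<and> P t} = {t\<in>{..<T}. P t}" by auto
  then have "real (card {t. t < T \<and> P t}) = (\<Sum>t\<in>{t\<in>{..<T}. P t}. 1)" by simp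
  also have "\<dots> = (\<Sum>t<T. if P t then 1 else 0)" by (rule sum.inter_filter) (rule finite_lessThan)
  finally show ?thesis .
qed

lemma bad_sets: "{\<omega> \<in> space sample_space. \<not> good_event c \<alpha> n \<omega>} \<in> sets sample_space"
proof -
  have cs: "(\<lambda>\<omega>. real (card {t. t < T \<and> selected c \<omega> t \<and> \<omega> t \<in> thr_set c n})) \<in> borel_measurable sample_space" for T
  proof -
    have "(\<lambda>\<omega>. \<Sum>t<T. if \<omega> t \<in> thr_set c (nsel c \<omega> t) \<and> \<omega> t \<in> thr_set c n then 1 else 0 :: real) \<in> borel_measurable sample_space"
      by (intro borel_measurable_sum measurable_If sel_pred measurable_const, simp_all)
    then show ?thesis by (simp add: card_sum selected_def)
  qed
  have p1: "Measurable.pred sample_space (\<lambda>\<omega>. nsel c \<omega> T = n)" for T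
    by (rule pred_count_space_const1[OF nsel_meas])
  have p2: "Measurable.pred sample_space (\<lambda>\<omega>. \<alpha> * real n / 4 \<le> real (card {t. t < T \<and> selected c \<omega> t \<and> \<omega> t \<in> thr_set c n}))" for T
    using cs[of T] by measurable
  have "Measurable.pred sample_space (good_event c \<alpha> n)"
    unfolding good_event_def using p1 p2 by measurable
  then show ?thesis by measurable
qed



lemma cond_real:
  assumes "0 \<le> I" "0 \<le> c1" "0 \<le> \<rho>" "0 \<le> u" "0 \<le> c0" "I*c1 + \<rho>*u*c0 \<le> c0"
  shows "ennreal I * ennreal c1 + ennreal \<rho> * ennreal u * ennreal c0 \<le> ennreal c0"
proof -
  have "ennreal I * ennreal c1 + ennreal \<rho> * ennreal u * ennreal c0 = ennreal (I*c1 + \<rho>*u*c0)"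
    using assms by (simp add: ennreal_mult)
  also have "\<dots> \<le> ennreal c0" by (rule ennreal_leI) (rule assms(6))
  finally show ?thesis .
qed

lemma emeasure_mu_eq: "A \<in> sets borel \<Longrightarrow> emeasure mu A = ennreal (measure mu A)"
proof -
  interpret prob_space mu by (rule prob_space_mu)
  show "A \<in> sets borel \<Longrightarrow> ?thesis" by (simp add: emeasure_eq_measure)
qed

lemma measure_mu_compl: "A \<in> sets borel \<Longrightarrow> measure mu (UNIV - A) = 1 - measure mu A"
  using prob_space.prob_compl[OF prob_space_mu, of A] by simp

lemma measure_mu_mono: "A \<subseteq> B \<Longrightarrow> B \<in> sets borel \<Longrightarrow> measure mu A \<le> measure mu B"
proof -
  interpret prob_space mu by (rule prob_space_mu)
  show "A \<subseteq> B \<Longrightarrow> B \<in> sets borel \<Longrightarrow> ?thesis" by (rule finite_measure_mono) auto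
qed

lemma measure_mu_Diff: "A \<in> sets borel \<Longrightarrow> B \<in> sets borel \<Longrightarrow> B \<subseteq> A \<Longrightarrow> measure mu (A - B) = measure mu A - measure mu B"
proof -
  interpret prob_space mu by (rule prob_space_mu)
  show "A \<in> sets borel \<Longrightarrow> B \<in> sets borel \<Longrightarrow> B \<subseteq> A \<Longrightarrow> ?thesis" by (rule finite_measure_Diff) auto
qed

lemma measure_mu_le1: "measure mu A \<le> 1"
  using prob_space.prob_le_1[OF prob_space_mu] by simp

lemma rho_ineq:
  fixes a p \<rho> :: real
  assumes "0 < a" "a \<le> p" "p \<le> 1" "\<rho> = 1 + a/2"
  shows "\<rho> * (1 - p) \<le> 1 - p/2"
proof -
  have "\<rho> * (1 - p) \<le> (1 + p/2) * (1 - p)"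
    using assms by (intro mult_right_mono) auto
  also have "\<dots> = 1 - p/2 - p*p/2" by (simp add: field_simps)
  also have "\<dots> \<le> 1 - p/2" using assms by simp
  finally show ?thesis .
qed



lemma main_bound:
  fixes c :: "nat \<Rightarrow> real" and \<alpha> :: real and n :: nat
  assumes c_range: "\<And>i. i \<ge> 1 \<Longrightarrow> 0 < c i \<and> c i \<le> 1"
    and c_noninc: "\<And>i j. 1 \<le> i \<Longrightarrow> i \<le> j \<Longrightarrow> c j \<le> c i"
    and ap: "0 < \<alpha>" and a1: "\<alpha> \<le> 1" and n2: "2 \<le> n"
    and ratio: "\<alpha> \<le> c n / c (n div 2)"
  shows "measure sample_space {\<omega> \<in> space sample_space. \<not> good_event c \<alpha> n \<omega>}
     \<le> 2 powr (\<alpha>*n/4) * (1 - \<alpha>/2) ^ (n - n div 2)"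
proof -
  define m where "m = n div 2"
  define A where "A = thr_set c"
  define B where "B = thr_set c n"
  define q where "q = 1 - \<alpha>/2"
  define K where "K = \<alpha> * real n / 4"
  define bad where "bad = {\<omega> \<in> space sample_space. \<not> good_event c \<alpha> n \<omega>}"
  have m1: "1 \<le> m" "m < n" using n2 by (auto simp: m_def)
  have An: "\<And>j. 1 \<le> j \<Longrightarrow> A j = Xc (c j)" unfolding A_def by (simp add: thr_set_eq)
  have Bx: "B = Xc (c n)" unfolding B_def using n2 by (simp add: thr_set_eq)
  have Asets: "\<And>j. A j \<in> sets borel" unfolding A_def by (rule thr_set_sets)
  have Bsets: "B \<in> sets borel" unfolding B_def by (rule thr_set_sets)
  have BA: "B \<subseteq> A j" if "j \<le> n" for j
  proof (cases "j = 0")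
    case True then show ?thesis by (simp add: A_def thr_set_def Bx Xc_sub)
  next
    case False then show ?thesis using that by (simp add: An Bx Xc_mono c_noninc)
  qed
  have cm: "0 < c m" using c_range m1 by simp
  have cn: "0 < c n" "c n \<le> 1" using c_range n2 by auto
  have ratio': "\<alpha> * c m \<le> c n" using ratio cm by (simp add: m_def pos_le_divide_eq)
  have F4: "\<alpha> * measure mu (A j) \<le> measure mu B" if "m \<le> j" "j < n" for j
  proof -
    have "measure mu (A j) \<le> measure mu (Xc (c m))"
      using that m1 by (simp add: An measure_mu_mono Xc_mono c_noninc)
    then have "\<alpha> * measure mu (A j) \<le> \<alpha> * measure mu (Xc (c m))" using ap by simp
    also have "\<dots> \<le> measure mu (Xc (\<alpha> * c m))" by (rule Xc_scale[OF ap a1 cm])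
    also have "\<dots> \<le> measure mu B" unfolding Bx by (rule measure_mu_mono) (simp_all add: Xc_mono ratio')
    finally show ?thesis .
  qed
  define a where "a = measure mu B"
  have apos: "0 < a" using Xc_lower[OF cn] cn by (simp add: a_def Bx)
  have aA: "a \<le> measure mu (A j)" if "j \<le> n" for j
    unfolding a_def by (rule measure_mu_mono[OF BA[OF that] Asets])
  define \<rho> where "\<rho> = 1 + a/2"
  have \<rho>1: "1 < \<rho>" using apos by (simp add: \<rho>_def)
  have q: "0 \<le> q" "q \<le> 1" using ap a1 by (auto simp: q_def)
  have PS: "prob_space sample_space" unfolding sample_space_def
    by (rule prob_space_PiM) (rule prob_space_mu)

  define g1 where "g1 = (\<lambda>j x. if m \<le> j \<and> x \<in> B then ennreal (1/2) else 1)"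
  define C1 where "C1 = (\<lambda>j. ennreal (q ^ (n - max j m)))"
  define V1 where "V1 = V A n g1 1 0"
  have I1: "(\<integral>\<^sup>+\<omega>. V1 T 0 \<omega> \<partial>sample_space) \<le> C1 0" for T
    unfolding sample_space_def V1_def
  proof (rule V_bound[OF prob_space_mu])
    show "A j \<in> sets mu" for j using Asets by simp
    show "g1 j \<in> borel_measurable mu" for j unfolding g1_def using Bsets by measurable
    show "0 \<le> C1 j" for j by simp
    show "1 \<le> C1 j" if "n \<le> j" for j using that by (simp add: C1_def)
  next
    fix j assume jn: "j < n"
    have jn': "j \<le> n" using jn by simp
    have Ajs: "A j \<in> sets borel" by (rule Asets)
    have compl: "emeasure mu (UNIV - A j) = ennreal (1 - measure mu (A j))"
      using Ajs by (simp add: emeasure_mu_eq measure_mu_compl)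
    have mA1: "measure mu (A j) \<le> 1" by (rule measure_mu_le1)
    show "(\<integral>\<^sup>+x. indicator (A j) x * g1 j x \<partial>mu) * C1 (Suc j) + 1 * emeasure mu (space mu - A j) * C1 j \<le> C1 j"
    proof (cases "m \<le> j")
      case True
      have "(\<integral>\<^sup>+x. indicator (A j) x * g1 j x \<partial>mu) = (\<integral>\<^sup>+x. ennreal (1/2) * indicator B x + indicator (A j - B) x \<partial>mu)"
        by (rule nn_integral_cong) (use BA[OF jn'] True in \<open>auto simp: g1_def indicator_def\<close>)
      also have "\<dots> = ennreal (1/2) * emeasure mu B + emeasure mu (A j - B)"
        using Bsets Ajs by (simp add: nn_integral_add nn_integral_cmult_indicator)
      also have "\<dots> = ennreal (measure mu B / 2 + (measure mu (A j) - measure mu B))"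
      proof -
        have e1: "emeasure mu B = ennreal (measure mu B)" by (rule emeasure_mu_eq[OF Bsets])
        have e2: "emeasure mu (A j - B) = ennreal (measure mu (A j) - measure mu B)"
          using emeasure_mu_eq[OF sets.Diff[OF Ajs Bsets]] measure_mu_Diff[OF Ajs Bsets BA[OF jn']] by simp
        have d: "0 \<le> measure mu (A j) - measure mu B" using measure_mu_mono[OF BA[OF jn'] Ajs] by simp
        have "ennreal (1/2) * ennreal (measure mu B) = ennreal (measure mu B / 2)"
          by (subst ennreal_mult[symmetric]) (simp_all add: measure_nonneg)
        then show ?thesis unfolding e1 e2
          by (simp only:) (subst ennreal_plus[symmetric], simp_all add: measure_nonneg d measure_mu_mono[OF BA[OF jn'] Ajs])
      qed
      finally have int: "(\<integral>\<^sup>+x. indicator (A j) x * g1 j x \<partial>mu) = ennreal (measure mu B / 2 + (measure mu (A j) - measure mu B))" .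
      define p where "p = q ^ (n - Suc j)"
      have p0: "0 \<le> p" using q by (simp add: p_def)
      have C1s: "C1 (Suc j) = ennreal p" using True by (simp add: C1_def p_def max_def)
      have qp: "q ^ (n - j) = q * p" using jn by (simp add: p_def power_Suc[symmetric] Suc_diff_Suc)
      have C1j: "C1 j = ennreal (q * p)" using True by (simp add: C1_def max_def qp)
      have key: "measure mu (A j) - measure mu B / 2 \<le> measure mu (A j) * q"
        using F4[OF True jn] by (simp add: q_def algebra_simps)
      have key2: "(measure mu (A j) - measure mu B / 2) * p \<le> measure mu (A j) * q * p"
        by (rule mult_right_mono[OF key p0])
      have I0: "0 \<le> measure mu B / 2 + (measure mu (A j) - measure mu B)"
        using measure_mu_mono[OF BA[OF jn'] Ajs] measure_nonneg[of mu B] by linarith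
      have real: "(measure mu B / 2 + (measure mu (A j) - measure mu B)) * p + 1 * (1 - measure mu (A j)) * (q * p) \<le> q * p"
        using key2 by (simp add: algebra_simps)
      have "ennreal (measure mu B / 2 + (measure mu (A j) - measure mu B)) * ennreal p + ennreal 1 * ennreal (1 - measure mu (A j)) * ennreal (q * p) \<le> ennreal (q * p)"
        by (rule cond_real[OF I0 p0 _ _ _ real]) (use mA1 p0 q in auto)
      then show ?thesis by (simp add: int C1s C1j compl)
    next
      case False
      have int: "(\<integral>\<^sup>+x. indicator (A j) x * g1 j x \<partial>mu) = ennreal (measure mu (A j))"
        using False Ajs by (simp add: g1_def emeasure_mu_eq)
      define p where "p = q ^ (n - m)"
      have p0: "0 \<le> p" using q by (simp add: p_def)
      have C1s: "C1 (Suc j) = ennreal p" "C1 j = ennreal p" using False by (simp_all add: C1_def p_def max_def)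
      have real: "measure mu (A j) * p + 1 * (1 - measure mu (A j)) * p \<le> p"
        by (simp add: algebra_simps)
      have "ennreal (measure mu (A j)) * ennreal p + ennreal 1 * ennreal (1 - measure mu (A j)) * ennreal p \<le> ennreal p"
        by (rule cond_real[OF _ p0 _ _ p0 real]) (use mA1 in \<open>auto simp: measure_nonneg\<close>)
      then show ?thesis by (simp add: int C1s compl)
    qed
  qed

  define C2 where "C2 = (\<lambda>j. ennreal (2 ^ (n - j)))"
  define V2 where "V2 = V A n (\<lambda>j x. 1) (ennreal \<rho>) 1"
  have I2: "(\<integral>\<^sup>+\<omega>. V2 T 0 \<omega> \<partial>sample_space) \<le> C2 0" for T
    unfolding sample_space_def V2_def
  proof (rule V_bound[OF prob_space_mu])
    show "A j \<in> sets mu" for j using Asets by simp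
    show "(\<lambda>x. 1) \<in> borel_measurable mu" for j by simp
    show "1 \<le> C2 j" for j by (simp add: C2_def)
    show "1 \<le> C2 j" if "n \<le> j" for j by (simp add: C2_def)
  next
    fix j assume jn: "j < n"
    have jn': "j \<le> n" using jn by simp
    have Ajs: "A j \<in> sets borel" by (rule Asets)
    have compl: "emeasure mu (UNIV - A j) = ennreal (1 - measure mu (A j))"
      using Ajs by (simp add: emeasure_mu_eq measure_mu_compl)
    have mA1: "measure mu (A j) \<le> 1" by (rule measure_mu_le1)
    have int: "(\<integral>\<^sup>+x. indicator (A j) x * 1 \<partial>mu) = ennreal (measure mu (A j))"
      using Ajs by (simp add: emeasure_mu_eq)
    define p where "p = (2::real) ^ (n - Suc j)"
    have p0: "0 \<le> p" by (simp add: p_def)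
    have pp: "(2::real) ^ (n - j) = 2 * p" using jn by (simp add: p_def power_Suc[symmetric] Suc_diff_Suc)
    have C2s: "C2 (Suc j) = ennreal p" "C2 j = ennreal (2 * p)" by (simp_all add: C2_def p_def pp)
    have ri: "\<rho> * (1 - measure mu (A j)) \<le> 1 - measure mu (A j) / 2"
      by (rule rho_ineq[OF apos aA[OF jn'] mA1]) (simp add: \<rho>_def)
    have "\<rho> * (1 - measure mu (A j)) * (2 * p) \<le> (1 - measure mu (A j) / 2) * (2 * p)"
      by (rule mult_right_mono[OF ri]) (use p0 in simp)
    then have real: "measure mu (A j) * p + \<rho> * (1 - measure mu (A j)) * (2 * p) \<le> 2 * p"
      by (simp add: algebra_simps)
    have "ennreal (measure mu (A j)) * ennreal p + ennreal \<rho> * ennreal (1 - measure mu (A j)) * ennreal (2 * p) \<le> ennreal (2 * p)"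
      by (rule cond_real[OF _ p0 _ _ _ real]) (use mA1 p0 \<rho>1 in \<open>auto simp: measure_nonneg\<close>)
    then show "(\<integral>\<^sup>+x. indicator (A j) x * 1 \<partial>mu) * C2 (Suc j) + ennreal \<rho> * emeasure mu (space mu - A j) * C2 j \<le> C2 j"
      by (simp only: int C2s compl space_mu)
  qed
  have Asets': "\<And>j. A j \<in> sets mu" using Asets by simp
  have gm1: "\<And>j. g1 j \<in> borel_measurable mu" unfolding g1_def using Bsets by measurable
  have mV1: "\<And>T. (\<lambda>\<omega>. V1 T 0 \<omega>) \<in> borel_measurable sample_space"
    unfolding V1_def sample_space_def by (rule V_measurable[OF Asets' gm1])
  have mV2: "\<And>T. (\<lambda>\<omega>. V2 T 0 \<omega>) \<in> borel_measurable sample_space"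
    unfolding V2_def sample_space_def by (rule V_measurable[OF Asets']) simp
  have badsets: "bad \<in> sets sample_space" unfolding bad_def by (rule bad_sets)
  have pw: "indicator bad \<omega> \<le> ennreal (2 powr K) * V1 (T+n) 0 \<omega> + ennreal (inverse (\<rho>^T)) * V2 (T+n) 0 \<omega>" for T \<omega>
  proof (cases "\<omega> \<in> bad")
    case False then show ?thesis by simp
  next
    case True
    then have ng: "\<not> good_event c \<alpha> n \<omega>" by (simp add: bad_def)
    have ind: "indicator bad \<omega> = (1::ennreal)" using True by simp
    show ?thesis
    proof (cases "stg A 0 \<omega> (T+n) < n")
      case True
      have "ennreal \<rho> ^ (T + n + 0 - n) \<le> V2 (T+n) 0 \<omega>" unfolding V2_def
        by (rule V2_lower) (use \<rho>1 True in auto)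
      then have lb: "ennreal (\<rho>^T) \<le> V2 (T+n) 0 \<omega>" using \<rho>1 by (simp add: ennreal_power)
      have pos: "0 < \<rho>^T" using \<rho>1 by simp
      have "(1::ennreal) = ennreal (inverse (\<rho>^T) * \<rho>^T)" using pos \<rho>1 by (simp add: field_simps)
      also have "\<dots> = ennreal (inverse (\<rho>^T)) * ennreal (\<rho>^T)" by (rule ennreal_mult) (use pos in auto)
      also have "\<dots> \<le> ennreal (inverse (\<rho>^T)) * V2 (T+n) 0 \<omega>" by (rule mult_left_mono[OF lb]) simp
      also have "\<dots> \<le> ennreal (2 powr K) * V1 (T+n) 0 \<omega> + ennreal (inverse (\<rho>^T)) * V2 (T+n) 0 \<omega>"
        by (rule add_increasing) simp_all
      finally show ?thesis unfolding ind .
    next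
      case False
      then have nn: "n \<le> nsel c \<omega> (T+n)" by (simp add: nsel_stg A_def)
      define h where "h = hc A B m n 0 \<omega> (T+n)"
      have hcK: "\<not> K \<le> real h" using good_suff[OF nn] ng unfolding K_def A_def B_def h_def by blast
      have "ennreal (1/2) ^ h \<le> V1 (T+n) 0 \<omega>" unfolding V1_def g1_def h_def
        by (rule V1_lower) (use False in auto)
      moreover have eqp: "ennreal ((1/2)^h) = ennreal (1/2) ^ h" by (rule ennreal_power[symmetric]) simp
      ultimately have lb: "ennreal ((1/2)^h) \<le> V1 (T+n) 0 \<omega>" by (simp only: eqp)
      have p1: "(2::real) powr real h \<le> 2 powr K" by (rule powr_mono) (use hcK in auto)
      have p2: "((1::real)/2)^h = 1 / 2 powr real h" by (simp add: powr_realpow power_one_over)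
      have r1: "1 \<le> 2 powr K * (1/2)^h" unfolding p2 using p1 by simp
      have "(1::ennreal) \<le> ennreal (2 powr K * (1/2)^h)" using r1 by (simp add: ennreal_leI del: ennreal_1) 
      also have "\<dots> = ennreal (2 powr K) * ennreal ((1/2)^h)" by (rule ennreal_mult) auto
      also have "\<dots> \<le> ennreal (2 powr K) * V1 (T+n) 0 \<omega>" by (rule mult_left_mono[OF lb]) simp
      also have "\<dots> \<le> ennreal (2 powr K) * V1 (T+n) 0 \<omega> + ennreal (inverse (\<rho>^T)) * V2 (T+n) 0 \<omega>"
        by (rule add_increasing2) simp_all
      finally show ?thesis unfolding ind .
    qed
  qed
  have em: "emeasure sample_space bad \<le> ennreal (2 powr K * q^(n-m) + inverse (\<rho>^T) * 2^n)" for T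
  proof -
    have "emeasure sample_space bad = (\<integral>\<^sup>+\<omega>. indicator bad \<omega> \<partial>sample_space)"
      by (rule nn_integral_indicator[symmetric, OF badsets])
    also have "\<dots> \<le> (\<integral>\<^sup>+\<omega>. ennreal (2 powr K) * V1 (T+n) 0 \<omega> + ennreal (inverse (\<rho>^T)) * V2 (T+n) 0 \<omega> \<partial>sample_space)"
      by (rule nn_integral_mono) (rule pw)
    also have "\<dots> = ennreal (2 powr K) * (\<integral>\<^sup>+\<omega>. V1 (T+n) 0 \<omega> \<partial>sample_space) + ennreal (inverse (\<rho>^T)) * (\<integral>\<^sup>+\<omega>. V2 (T+n) 0 \<omega> \<partial>sample_space)"
      using mV1 mV2 by (simp add: nn_integral_add nn_integral_cmult)
    also have "\<dots> \<le> ennreal (2 powr K) * C1 0 + ennreal (inverse (\<rho>^T)) * C2 0"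
      by (intro add_mono mult_left_mono I1 I2) simp_all
    also have "\<dots> = ennreal (2 powr K * q^(n-m) + inverse (\<rho>^T) * 2^n)"
      using q \<rho>1 by (simp add: C1_def C2_def ennreal_mult)
    finally show ?thesis .
  qed
  have ms: "measure sample_space bad \<le> 2 powr K * q^(n-m) + inverse (\<rho>^T) * 2^n" for T
  proof -
    interpret prob_space sample_space by (rule PS)
    have "ennreal (measure sample_space bad) \<le> ennreal (2 powr K * q^(n-m) + inverse (\<rho>^T) * 2^n)"
      using em[of T] badsets by (simp add: emeasure_eq_measure)
    then show ?thesis using q \<rho>1 by (subst (asm) ennreal_le_iff) auto
  qed
  have lim: "(\<lambda>T. 2 powr K * q^(n-m) + inverse (\<rho>^T) * 2^n) \<longlonglongrightarrow> 2 powr K * q^(n-m) + 0 * 2^n"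
    by (intro tendsto_intros LIMSEQ_inverse_realpow_zero \<rho>1)
  have "measure sample_space bad \<le> 2 powr K * q^(n-m) + 0 * 2^n"
    by (rule LIMSEQ_le_const[OF lim]) (use ms in auto)
  then show ?thesis by (simp add: bad_def K_def q_def m_def)
qed



lemma expo_eq: fixes \<alpha> x l :: real shows "\<alpha>*x/4 * l + x / 2 * (-\<alpha>/2) = - (\<alpha> * (1 - l) / 4) * x"
  by (simp add: field_simps)

lemma exp_bound:
  fixes \<alpha> :: real and n :: nat
  assumes "0 < \<alpha>" "\<alpha> \<le> 1"
  shows "2 powr (\<alpha>*n/4) * (1 - \<alpha>/2) ^ (n - n div 2) \<le> exp (- (\<alpha> * (1 - ln 2) / 4) * n)"
proof -
  have q0: "0 \<le> 1 - \<alpha>/2" using assms by simp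
  have "(1 - \<alpha>/2) ^ (n - n div 2) \<le> exp (-\<alpha>/2) ^ (n - n div 2)"
    by (rule power_mono[OF _ q0]) (use exp_ge_add_one_self[of "-\<alpha>/2"] in simp)
  also have "\<dots> = exp (real (n - n div 2) * (-\<alpha>/2))" by (rule exp_of_nat_mult[symmetric])
  also have "\<dots> \<le> exp (real n / 2 * (-\<alpha>/2))"
  proof -
    have "real n / 2 \<le> real (n - n div 2)" by linarith
    then show ?thesis using assms by (intro exp_mono) (simp add: mult_right_mono_neg)
  qed
  finally have h1: "(1 - \<alpha>/2) ^ (n - n div 2) \<le> exp (real n / 2 * (-\<alpha>/2))" .
  have h2: "2 powr (\<alpha>*n/4) = exp (\<alpha>*n/4 * ln 2)" by (simp add: powr_def)
  have "2 powr (\<alpha>*n/4) * (1 - \<alpha>/2) ^ (n - n div 2) \<le> exp (\<alpha>*n/4 * ln 2) * exp (real n / 2 * (-\<alpha>/2))"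
    unfolding h2 by (rule mult_left_mono[OF h1]) simp
  also have "\<dots> = exp (- (\<alpha> * (1 - ln 2) / 4) * n)"
  proof -
    have e: "\<alpha>*n/4 * ln 2 + real n / 2 * (-\<alpha>/2) = - (\<alpha> * (1 - ln 2) / 4) * n"
      by (rule expo_eq)
    show ?thesis unfolding exp_add[symmetric] e ..
  qed
  finally show ?thesis .
qed

theorem lemma5:
  fixes c :: "nat \<Rightarrow> real" and \<alpha> :: real
  assumes c_range: "\<And>i. i \<ge> 1 \<Longrightarrow> 0 < c i \<and> c i \<le> 1"
    and c_noninc: "\<And>i j. 1 \<le> i \<Longrightarrow> i \<le> j \<Longrightarrow> c j \<le> c i"
    and c_poly: "\<exists>k::nat. c \<in> \<Omega>(\<lambda>i. 1 / real i ^ k)"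
    and alpha_pos: "\<alpha> > 0"
    and c_ratio: "eventually (\<lambda>i. c i / c (i div 2) \<ge> \<alpha>) at_top"
  shows "(\<forall>n. {\<omega> \<in> space sample_space. \<not> good_event c \<alpha> n \<omega>} \<in> sets sample_space)
       \<and> (\<lambda>n. measure sample_space {\<omega> \<in> space sample_space. \<not> good_event c \<alpha> n \<omega>})
           \<in> o(\<lambda>n. c n)"
proof
  show "\<forall>n. {\<omega> \<in> space sample_space. \<not> good_event c \<alpha> n \<omega>} \<in> sets sample_space"
    using bad_sets by blast
next
  define P where "P = (\<lambda>n. measure sample_space {\<omega> \<in> space sample_space. \<not> good_event c \<alpha> n \<omega>})"
  define \<beta> where "\<beta> = \<alpha> * (1 - ln 2) / 4"
  have \<beta>: "0 < \<beta>" using alpha_pos ln_2_less_1 by (simp add: \<beta>_def)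
  obtain N where N: "\<And>i. i \<ge> N \<Longrightarrow> \<alpha> \<le> c i / c (i div 2)"
    using c_ratio unfolding eventually_at_top_linorder by blast
  have a1: "\<alpha> \<le> 1"
  proof -
    define i where "i = max N 2"
    have i: "i \<ge> N" "2 \<le> i" by (auto simp: i_def)
    have pos: "0 < c (i div 2)" using c_range i by simp
    have "c i \<le> c (i div 2)" using c_noninc[of "i div 2" i] i by simp
    then have "c i / c (i div 2) \<le> 1" using pos by simp
    then show ?thesis using N[OF i(1)] by simp
  qed
  have ev: "eventually (\<lambda>n. P n \<le> exp (- \<beta> * n)) at_top"
    unfolding eventually_at_top_linorder
  proof (intro exI allI impI)
    fix n assume n: "n \<ge> max N 2"
    have "P n \<le> 2 powr (\<alpha>*n/4) * (1 - \<alpha>/2) ^ (n - n div 2)"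
      unfolding P_def by (rule main_bound[OF c_range c_noninc alpha_pos a1]) (use n N in auto)
    also have "\<dots> \<le> exp (- \<beta> * n)" unfolding \<beta>_def by (rule exp_bound[OF alpha_pos a1])
    finally show "P n \<le> exp (- \<beta> * n)" .
  qed
  have P0: "\<And>n. 0 \<le> P n" by (simp add: P_def)
  have bigo: "P \<in> O(\<lambda>n. exp (- \<beta> * real n))"
    by (rule bigoI[where c=1]) (use ev P0 in \<open>auto elim!: eventually_mono\<close>)
  obtain k :: nat where k: "c \<in> \<Omega>(\<lambda>i. 1 / real i ^ k)" using c_poly by blast
  have k': "(\<lambda>i. 1 / real i ^ k) \<in> O(c)" using k by (simp add: bigomega_iff_bigo)
  have sm: "(\<lambda>n. exp (- \<beta> * real n)) \<in> o(\<lambda>i. 1 / real i ^ k)"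
    using \<beta> by real_asymp
  have "P \<in> o(c)"
    by (rule landau_o.big_small_trans[OF bigo landau_o.small_big_trans[OF sm k']])
  then show "(\<lambda>n. measure sample_space {\<omega> \<in> space sample_space. \<not> good_event c \<alpha> n \<omega>}) \<in> o(\<lambda>n. c n)"
    by (simp add: P_def)
qed


end
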